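(* Let $G$ be a finite abelian group of even order and $S=\{s^{\pm1},t^{\pm1},u^{\pm1}\}$ a symmetric generating set. Suppose the $18$ elements $s^it^ju^k$ ($0\le i\le2$, $0\le j\le2$, $0\le k\le1$) are distinct, and let $Y$ be the set of them. Suppose either $G=Y$, or there is a hamiltonian cycle of the subgraph of $\mathrm{Cay}(G;S)$ induced by $G\setminus Y$ that contains the edge from $t^3$ to $t^3s$. Then $\mathcal H$ contains every basic $4$-cycle.
   Context: $\mathrm{Cay}(G;S)$ has vertex set $G$ and edges $\{g,gs\}$. $[v](t_1,\dots,t_n)$ denotes the walk $v,vt_1,\dots,vt_1\cdots t_n$; closed walks are identified with flows ($+1$ on traversed oriented edges, $-1$ on reversals). A basic $4$-cycle is a closed walk $[v](a,b,a^{-1},b^{-1})$ with $v\in G$, $a,b\in S$. A flow is $f:G\times S\to\mathbb Z$ with $f(v,a)=-f(va,a^{-1})$ and $\sum_af(v,a)=0$. $\mathcal H$ is the subgroup of flows generated by oriented hamiltonian cycles. *)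

theory Defs
  imports "HOL-Algebra.Algebra"
begin

definition walk_vert :: "('a, 'b) monoid_scheme \<Rightarrow> 'a \<Rightarrow> 'a list \<Rightarrow> nat \<Rightarrow> 'a" where
  "walk_vert G v ts i = foldl (\<lambda>x a. x \<otimes>\<^bsub>G\<^esub> a) v (take i ts)"

text \<open>The flow of the walk [v](t_1,...,t_n): +1 on each traversed oriented edge (w,a),
  -1 on its reversal (w a, a^{-1}); flows are functions G x S -> int (zero elsewhere).\<close>
definition walk_flow :: "('a, 'b) monoid_scheme \<Rightarrow> 'a \<Rightarrow> 'a list \<Rightarrow> 'a \<Rightarrow> 'a \<Rightarrow> int" where
  "walk_flow G v ts = (\<lambda>w a. \<Sum>i<length ts.
      (if w = walk_vert G v ts i \<and> a = ts ! i then 1 else 0)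
    - (if w = walk_vert G v ts (Suc i) \<and> a = inv\<^bsub>G\<^esub> (ts ! i) then 1 else 0))"

definition ham_cycle :: "('a, 'b) monoid_scheme \<Rightarrow> 'a set \<Rightarrow> 'a \<Rightarrow> 'a list \<Rightarrow> bool" where
  "ham_cycle G S v ts \<longleftrightarrow> v \<in> carrier G \<and> set ts \<subseteq> S \<and>
     length ts = card (carrier G) \<and> length ts \<ge> 3 \<and>
     walk_vert G v ts (length ts) = v \<and>
     distinct (map (walk_vert G v ts) [0..<length ts]) \<and>
     set (map (walk_vert G v ts) [0..<length ts]) = carrier G"

inductive_set ham_span :: "('a, 'b) monoid_scheme \<Rightarrow> 'a set \<Rightarrow> ('a \<Rightarrow> 'a \<Rightarrow> int) set"
  for G S where
    zero: "(\<lambda>_ _. 0) \<in> ham_span G S"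
  | ham: "ham_cycle G S v ts \<Longrightarrow> walk_flow G v ts \<in> ham_span G S"
  | diff: "f \<in> ham_span G S \<Longrightarrow> g \<in> ham_span G S \<Longrightarrow> (\<lambda>w a. f w a - g w a) \<in> ham_span G S"

definition cay_adj :: "('a, 'b) monoid_scheme \<Rightarrow> 'a set \<Rightarrow> 'a \<Rightarrow> 'a \<Rightarrow> bool" where
  "cay_adj G S x y \<longleftrightarrow> x \<in> carrier G \<and> (\<exists>a\<in>S. y = x \<otimes>\<^bsub>G\<^esub> a)"

definition induced_ham_cycle_with_edge ::
  "('a, 'b) monoid_scheme \<Rightarrow> 'a set \<Rightarrow> 'a set \<Rightarrow> 'a \<Rightarrow> 'a \<Rightarrow> bool" where
  "induced_ham_cycle_with_edge G S V x y \<longleftrightarrow>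
     (\<exists>vs. distinct vs \<and> set vs = V \<and> length vs \<ge> 3 \<and>
        (\<forall>i<length vs. cay_adj G S (vs ! i) (vs ! (Suc i mod length vs))) \<and>
        (\<exists>i<length vs. {vs ! i, vs ! (Suc i mod length vs)} = {x, y}))"

end

theory Submission
  imports Defs "HOL-Library.Function_Algebras"
begin

definition E :: "('a, 'b) monoid_scheme \<Rightarrow> 'a \<Rightarrow> 'a \<Rightarrow> 'a \<Rightarrow> 'a \<Rightarrow> int" where
  "E G x a = (\<lambda>w c. (if w = x \<and> c = a then 1 else 0)
     - (if w = x \<otimes>\<^bsub>G\<^esub> a \<and> c = inv\<^bsub>G\<^esub> a then 1 else 0))"

fun vl :: "('a, 'b) monoid_scheme \<Rightarrow> 'a \<Rightarrow> 'a list \<Rightarrow> 'a list" where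
  "vl G v [] = []"
| "vl G v (a # ts) = v # vl G (v \<otimes>\<^bsub>G\<^esub> a) ts"

lemma walk_vert_0[simp]: "walk_vert G v ts 0 = v"
  by (simp add: walk_vert_def)

lemma walk_vert_Cons0: "walk_vert G v (a # ts) 0 = v"
  by (simp add: walk_vert_def)

lemma walk_vert_Cons_Suc: "walk_vert G v (a # ts) (Suc i) = walk_vert G (v \<otimes>\<^bsub>G\<^esub> a) ts i"
  by (simp add: walk_vert_def)

lemma walk_vert_len: "walk_vert G v ts (length ts) = foldl (\<lambda>x a. x \<otimes>\<^bsub>G\<^esub> a) v ts"
  by (simp add: walk_vert_def)

lemma map_walk_vert: "map (walk_vert G v ts) [0..<length ts] = vl G v ts"
proof (induction ts arbitrary: v)
  case Nil then show ?case by simp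
next
  case (Cons a ts)
  have "[0..<Suc (length ts)] = 0 # map Suc [0..<length ts]"
    by (simp add: map_Suc_upt upt_conv_Cons del: upt_Suc)
  then show ?case using Cons[of "v \<otimes>\<^bsub>G\<^esub> a"]
    by (simp add: walk_vert_Cons0 walk_vert_Cons_Suc comp_def)
qed

lemma vl_append: "vl G v (xs @ ys) = vl G v xs @ vl G (foldl (\<lambda>x a. x \<otimes>\<^bsub>G\<^esub> a) v xs) ys"
  by (induction xs arbitrary: v) auto

lemma length_vl[simp]: "length (vl G v ts) = length ts"
  by (induction ts arbitrary: v) auto

lemma walk_flow_Nil[simp]: "walk_flow G v [] = 0"
  by (rule ext)+ (simp add: walk_flow_def)

lemma walk_flow_Cons: "walk_flow G v (a # ts) = E G v a + walk_flow G (v \<otimes>\<^bsub>G\<^esub> a) ts"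
proof (rule ext, rule ext)
  fix w c
  show "walk_flow G v (a # ts) w c = (E G v a + walk_flow G (v \<otimes>\<^bsub>G\<^esub> a) ts) w c"
    unfolding walk_flow_def E_def plus_fun_def
    by (simp add: sum.lessThan_Suc_shift walk_vert_Cons0 walk_vert_Cons_Suc del: sum.lessThan_Suc)
qed

lemma ham_span_minus: "f \<in> ham_span G S \<Longrightarrow> g \<in> ham_span G S \<Longrightarrow> f - g \<in> ham_span G S"
proof -
  assume "f \<in> ham_span G S" "g \<in> ham_span G S"
  then have "(\<lambda>w a. f w a - g w a) \<in> ham_span G S" by (rule ham_span.diff)
  moreover have "(\<lambda>w a. f w a - g w a) = f - g" by (auto simp: fun_diff_def)
  ultimately show ?thesis by simp
qed

lemma ham_span_0: "0 \<in> ham_span G S"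
proof -
  have "(0::'a \<Rightarrow> 'a \<Rightarrow> int) = (\<lambda>_ _. 0)" by (simp add: zero_fun_def)
  then show ?thesis using ham_span.zero by metis
qed

lemma ham_span_uminus: "f \<in> ham_span G S \<Longrightarrow> - f \<in> ham_span G S"
  using ham_span_minus[OF ham_span_0] by (metis diff_0)

lemma ham_span_plus: "f \<in> ham_span G S \<Longrightarrow> g \<in> ham_span G S \<Longrightarrow> f + g \<in> ham_span G S"
  using ham_span_minus ham_span_uminus by (metis diff_minus_eq_add)

context group
begin

lemma E_inv: "x \<in> carrier G \<Longrightarrow> a \<in> carrier G \<Longrightarrow> E G (x \<otimes> a) (inv a) = - E G x a"
  unfolding E_def by (rule ext)+ (auto simp: m_assoc)

lemma vl_mult: "g \<in> carrier G \<Longrightarrow> v \<in> carrier G \<Longrightarrow> set ts \<subseteq> carrier G \<Longrightarrow>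
   vl G (g \<otimes> v) ts = map (\<lambda>x. g \<otimes> x) (vl G v ts)"
  by (induction ts arbitrary: v) (auto simp: m_assoc)

lemma foldl_mult: "g \<in> carrier G \<Longrightarrow> v \<in> carrier G \<Longrightarrow> set ts \<subseteq> carrier G \<Longrightarrow>
   foldl (\<lambda>x a. x \<otimes> a) (g \<otimes> v) ts = g \<otimes> foldl (\<lambda>x a. x \<otimes> a) v ts"
  by (induction ts arbitrary: v) (auto simp: m_assoc)

lemma ham_cycle_translate:
  assumes "ham_cycle G S v ts" "g \<in> carrier G" "S \<subseteq> carrier G"
  shows "ham_cycle G S (g \<otimes> v) ts"
proof -
  have v: "v \<in> carrier G" and ts: "set ts \<subseteq> carrier G" using assms unfolding ham_cycle_def by auto
  have im: "(\<lambda>x. g \<otimes> x) ` carrier G = carrier G"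
  proof
    show "(\<lambda>x. g \<otimes> x) ` carrier G \<subseteq> carrier G" using assms(2) by auto
    show "carrier G \<subseteq> (\<lambda>x. g \<otimes> x) ` carrier G"
    proof
      fix y assume "y \<in> carrier G"
      then have "y = g \<otimes> (inv g \<otimes> y)" "inv g \<otimes> y \<in> carrier G" using assms(2)
        by (auto simp: m_assoc[symmetric])
      then show "y \<in> (\<lambda>x. g \<otimes> x) ` carrier G" by blast
    qed
  qed
  have inj: "inj_on (\<lambda>x. g \<otimes> x) (carrier G)"
    using assms(2) by (auto intro: inj_onI)
  have sv: "set (vl G v ts) = carrier G" "distinct (vl G v ts)"
    using assms(1) unfolding ham_cycle_def map_walk_vert by auto
  show ?thesis using assms(1)
    unfolding ham_cycle_def map_walk_vert walk_vert_len
    using vl_mult[OF assms(2) v ts] foldl_mult[OF assms(2) v ts] v ts assms(2) sv im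
       distinct_map inj
    by (auto simp: distinct_map)
qed

end



definition Sq :: "('a, 'b) monoid_scheme \<Rightarrow> 'a \<Rightarrow> 'a \<Rightarrow> 'a \<Rightarrow> 'a \<Rightarrow> 'a \<Rightarrow> int" where
  "Sq G x a b = E G x a + E G (x \<otimes>\<^bsub>G\<^esub> a) b - E G (x \<otimes>\<^bsub>G\<^esub> b) a - E G x b"

lemma Sq_swap: "Sq G x b a = - Sq G x a b"
  by (simp add: Sq_def algebra_simps)

lemma Sq_same: "Sq G x a a = 0"
  by (simp add: Sq_def)

definition chain :: "('a, 'b) monoid_scheme \<Rightarrow> 'a set \<Rightarrow> 'a list \<Rightarrow> bool" where
  "chain G S ws \<longleftrightarrow> (\<forall>j. Suc j < length ws \<longrightarrow> cay_adj G S (ws ! j) (ws ! Suc j))"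

fun steps_of :: "('a, 'b) monoid_scheme \<Rightarrow> 'a list \<Rightarrow> 'a list" where
  "steps_of G (x # y # r) = (inv\<^bsub>G\<^esub> x \<otimes>\<^bsub>G\<^esub> y) # steps_of G (y # r)"
| "steps_of G _ = []"

context comm_group
begin

lemma Sq_inv1:
  assumes "x \<in> carrier G" "a \<in> carrier G" "b \<in> carrier G"
  shows "Sq G x (inv a) b = - Sq G (x \<otimes> inv a) a b"
proof -
  define y where "y = x \<otimes> inv a"
  have y: "y \<in> carrier G" using assms by (simp add: y_def)
  have x: "x = y \<otimes> a" using assms by (simp add: y_def m_assoc)
  have 1: "E G x (inv a) = - E G y a" using E_inv[OF y assms(2)] x by simp
  have 2: "x \<otimes> inv a = y" by (simp add: y_def)
  have 3: "E G (x \<otimes> b) (inv a) = - E G (y \<otimes> b) a"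
  proof -
    have "x \<otimes> b = (y \<otimes> b) \<otimes> a" using x y assms by (simp add: m_ac)
    then show ?thesis using E_inv[of "y \<otimes> b" a] y assms by simp
  qed
  have 4: "x = y \<otimes> a" by (rule x)
  show ?thesis unfolding Sq_def 1 2 3 y_def[symmetric] using 4
    by (simp add: algebra_simps)
qed

lemma walk_flow_sq:
  assumes "v \<in> carrier G" "a \<in> carrier G" "b \<in> carrier G"
  shows "walk_flow G v [a, b, inv a, inv b] = Sq G v a b"
proof -
  have 1: "v \<otimes> a \<otimes> b = (v \<otimes> b) \<otimes> a" using assms by (simp add: m_ac)
  have 2: "v \<otimes> a \<otimes> b \<otimes> inv a = v \<otimes> b"
  proof -
    have "v \<otimes> a \<otimes> b \<otimes> inv a = v \<otimes> b \<otimes> a \<otimes> inv a" using 1 by simp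
    also have "\<dots> = v \<otimes> b" using assms by (simp add: m_assoc)
    finally show ?thesis .
  qed
  have 3: "E G (v \<otimes> b \<otimes> a) (inv a) = - E G (v \<otimes> b) a" using assms by (simp add: E_inv)
  have 4: "E G (v \<otimes> b) (inv b) = - E G v b" using assms by (simp add: E_inv)
  have 5: "E G (v \<otimes> a \<otimes> b) (inv a) = - E G (v \<otimes> b) a" using 1 3 by simp
    show ?thesis by (simp add: walk_flow_Cons 2 4 5 Sq_def)
qed

lemma cay_adj_sym:
  assumes "S \<subseteq> carrier G" "\<And>a. a \<in> S \<Longrightarrow> inv a \<in> S" "y \<in> carrier G" "cay_adj G S x y"
  shows "cay_adj G S y x"
proof -
  obtain a where a: "a \<in> S" "y = x \<otimes> a" and x: "x \<in> carrier G"
    using assms(4) unfolding cay_adj_def by auto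
  have "x = y \<otimes> inv a" using a x assms(1) by (auto simp: m_assoc)
  then show ?thesis using assms a unfolding cay_adj_def by auto
qed

lemma steps_of_props:
  assumes "S \<subseteq> carrier G"
  shows "ws \<noteq> [] \<Longrightarrow> chain G S ws \<Longrightarrow>
    set (steps_of G ws) \<subseteq> S \<and> vl G (hd ws) (steps_of G ws) = butlast ws \<and>
    foldl (\<lambda>x a. x \<otimes> a) (hd ws) (steps_of G ws) = last ws"
proof (induction ws rule: induct_list012)
  case (3 x y r)
  have adj: "cay_adj G S x y" using "3.prems" unfolding chain_def by force
  have ch: "chain G S (y # r)" using "3.prems" unfolding chain_def
    by auto
  obtain a where a: "a \<in> S" "y = x \<otimes> a" and x: "x \<in> carrier G"
    using adj unfolding cay_adj_def by auto
  have ac: "a \<in> carrier G" using a assms by auto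
  have e: "inv x \<otimes> y = a" using a x ac by (simp add: m_assoc[symmetric])
  have xy: "x \<otimes> (inv x \<otimes> y) = y" using e a by simp
  show ?case using "3.IH" ch e xy a by simp
qed auto

end

locale P10 = comm_group G for G (structure) +
  fixes s t u :: 'a
  assumes s: "s \<in> carrier G" and t: "t \<in> carrier G" and u: "u \<in> carrier G"
begin

definition pt :: "'a \<Rightarrow> nat \<Rightarrow> nat \<Rightarrow> nat \<Rightarrow> 'a" where
  "pt g i j k = g \<otimes> (s [^] i \<otimes> t [^] j \<otimes> u [^] k)"

lemma pt_carrier[simp]: "g \<in> carrier G \<Longrightarrow> pt g i j k \<in> carrier G"
  using s t u by (simp add: pt_def)

lemma pt_s: "g \<in> carrier G \<Longrightarrow> pt g i j k \<otimes> s = pt g (Suc i) j k"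
  using s t u unfolding pt_def by (simp add: m_ac nat_pow_Suc)
lemma pt_t: "g \<in> carrier G \<Longrightarrow> pt g i j k \<otimes> t = pt g i (Suc j) k"
  using s t u unfolding pt_def by (simp add: m_ac nat_pow_Suc)
lemma pt_u: "g \<in> carrier G \<Longrightarrow> pt g i j k \<otimes> u = pt g i j (Suc k)"
  using s t u unfolding pt_def by (simp add: m_ac nat_pow_Suc)

lemma pt_is: "g \<in> carrier G \<Longrightarrow> pt g (Suc i) j k \<otimes> inv s = pt g i j k"
  using s by (simp add: pt_s[symmetric] m_assoc)
lemma pt_it: "g \<in> carrier G \<Longrightarrow> pt g i (Suc j) k \<otimes> inv t = pt g i j k"
  using t by (simp add: pt_t[symmetric] m_assoc)
lemma pt_iu: "g \<in> carrier G \<Longrightarrow> pt g i j (Suc k) \<otimes> inv u = pt g i j k"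
  using u by (simp add: pt_u[symmetric] m_assoc)

lemma E_is: "g \<in> carrier G \<Longrightarrow> E G (pt g (Suc i) j k) (inv s) = - E G (pt g i j k) s"
  using s by (simp add: pt_s[symmetric] E_inv)
lemma E_it: "g \<in> carrier G \<Longrightarrow> E G (pt g i (Suc j) k) (inv t) = - E G (pt g i j k) t"
  using t by (simp add: pt_t[symmetric] E_inv)
lemma E_iu: "g \<in> carrier G \<Longrightarrow> E G (pt g i j (Suc k)) (inv u) = - E G (pt g i j k) u"
  using u by (simp add: pt_u[symmetric] E_inv)

lemmas steps = pt_s pt_t pt_u
  pt_is[where i=0, simplified] pt_it[where j=0, simplified] pt_iu[where k=0, simplified]
  pt_is[where i=1, simplified] pt_it[where j=1, simplified] pt_iu[where k=1, simplified]
  E_is[where i=0, simplified] E_it[where j=0, simplified] E_iu[where k=0, simplified]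
  E_is[where i=1, simplified] E_it[where j=1, simplified] E_iu[where k=1, simplified]

lemma pt_g: "g \<in> carrier G \<Longrightarrow> pt g i j k = g \<otimes> pt \<one> i j k"
  using s t u by (simp add: pt_def)

end

locale P10b = P10 +
  fixes S Y
  assumes fin: "finite (carrier G)"
    and S_def: "S = {s, inv s, t, inv t, u, inv u}"
    and inj: "inj_on (\<lambda>(i, j, k). s [^] (i::nat) \<otimes> t [^] (j::nat) \<otimes> u [^] (k::nat))
                ({0..2} \<times> {0..2} \<times> {0..1})"
    and Y_def: "Y = (\<lambda>(i, j, k). s [^] (i::nat) \<otimes> t [^] (j::nat) \<otimes> u [^] (k::nat))
                ` ({0..2} \<times> {0..2} \<times> {0..1})"
    and hyp: "carrier G = Y \<or>
         induced_ham_cycle_with_edge G S (carrier G - Y) (t [^] (3::nat)) (t [^] (3::nat) \<otimes> s)"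
begin

lemma S_sub: "S \<subseteq> carrier G" using s t u by (auto simp: S_def)

lemma S_inv: "a \<in> S \<Longrightarrow> inv a \<in> S" using s t u by (auto simp: S_def)

lemma f_pt: "(\<lambda>(i, j, k). s [^] (i::nat) \<otimes> t [^] (j::nat) \<otimes> u [^] (k::nat)) = (\<lambda>(i, j, k). pt \<one> i j k)"
  using s t u by (auto simp: pt_def)

lemma inj': "inj_on (\<lambda>(i, j, k). pt \<one> i j k) ({0..2} \<times> {0..2} \<times> {0..1})"
  using inj by (simp add: f_pt)

lemma Y_pt: "Y = (\<lambda>(i, j, k). pt \<one> i j k) ` ({0..2} \<times> {0..2} \<times> {0..1})"
  using Y_def by (simp add: f_pt)

lemma Y_sub: "Y \<subseteq> carrier G" using Y_pt by auto

lemma card_Y: "card Y = 18"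
proof -
  have "card Y = card ({0..2::nat}\<times>{0..2::nat}\<times>{0..1::nat})"
    unfolding Y_pt using card_image[OF inj'] by simp
  then show ?thesis by (simp add: card_cartesian_product)
qed

lemma s_ne: "s \<noteq> \<one>"
proof
  assume s1: "s = \<one>"
  have "pt \<one> 1 0 0 = s" "pt \<one> 0 0 0 = \<one>" using s t u by (simp_all add: pt_def)
  then have "pt \<one> 1 0 0 = pt \<one> 0 0 0" using s1 by simp
  then have "(1::nat, 0::nat, 0::nat) = (0, 0, 0)"
    using inj'[THEN inj_onD, of "(1,0,0)" "(0,0,0)"] by simp
  then show False by simp
qed

definition good :: "'a list \<Rightarrow> bool" where
  "good P \<longleftrightarrow> set P \<subseteq> S \<and> foldl (\<lambda>x a. x \<otimes> a) (pt \<one> 0 2 0) P = pt \<one> 1 2 0 \<and>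
     distinct (vl G (pt \<one> 0 2 0) P @ [pt \<one> 1 2 0]) \<and> set (vl G (pt \<one> 0 2 0) P @ [pt \<one> 1 2 0]) = Y"

lemma goodI:
  assumes "set P \<subseteq> S" "foldl (\<lambda>x a. x \<otimes> a) (pt \<one> 0 2 0) P = pt \<one> 1 2 0"
    "vl G (pt \<one> 0 2 0) P @ [pt \<one> 1 2 0] = map (\<lambda>(i, j, k). pt \<one> i j k) L"
    "distinct L" "set L \<subseteq> {0..2} \<times> {0..2} \<times> {0..1}" "length L = 18"
  shows "good P"
proof -
  have c: "card (set L) = 18" using assms(4,6) distinct_card by metis
  have "set L = {0..2} \<times> {0..2} \<times> {0..1}"
    using card_subset_eq[OF _ assms(5)] c by (simp add: card_cartesian_product)
  then show ?thesis unfolding good_def using assms inj'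
    by (simp add: distinct_map Y_pt)
qed

lemma ham_cycleI:
  assumes "v \<in> carrier G" "set ts \<subseteq> S" "vl G v ts = L" "distinct L" "set L = carrier G"
    "length ts \<ge> 3" "foldl (\<lambda>x a. x \<otimes> a) v ts = v"
  shows "ham_cycle G S v ts"
proof -
  have "length ts = card (carrier G)"
    using assms(3-5) distinct_card length_vl by metis
  then show ?thesis unfolding ham_cycle_def map_walk_vert walk_vert_len using assms by simp
qed

lemma LemB: "\<exists>R. \<forall>P. good P \<longrightarrow> ham_cycle G S (pt \<one> 0 2 0) (P @ R)"
proof (cases "carrier G = Y")
  case True
  show ?thesis
  proof (intro exI allI impI)
    fix P assume "good P"
    then have g: "set P \<subseteq> S" "foldl (\<lambda>x a. x \<otimes> a) (pt \<one> 0 2 0) P = pt \<one> 1 2 0"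
     "distinct (vl G (pt \<one> 0 2 0) P @ [pt \<one> 1 2 0])" "set (vl G (pt \<one> 0 2 0) P @ [pt \<one> 1 2 0]) = Y"
      unfolding good_def by auto
    have len: "length (vl G (pt \<one> 0 2 0) P @ [pt \<one> 1 2 0]) = 18"
      using g(3,4) card_Y distinct_card by metis
    show "ham_cycle G S (pt \<one> 0 2 0) (P @ [inv s])"
    proof (rule ham_cycleI[where L="vl G (pt \<one> 0 2 0) P @ [pt \<one> 1 2 0]"])
      show "vl G (pt \<one> 0 2 0) (P @ [inv s]) = vl G (pt \<one> 0 2 0) P @ [pt \<one> 1 2 0]"
        by (simp add: vl_append g(2))
      show "3 \<le> length (P @ [inv s])" using len by simp
      show "foldl (\<lambda>x a. x \<otimes> a) (pt \<one> 0 2 0) (P @ [inv s]) = pt \<one> 0 2 0"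
        using g(2) by (simp add: steps)
    qed (use g True S_def in auto)
  qed
next
  case False
  then have "induced_ham_cycle_with_edge G S (carrier G - Y) (t [^] (3::nat)) (t [^] (3::nat) \<otimes> s)"
    using hyp by auto
  then obtain vs i where vs: "distinct vs" "set vs = carrier G - Y" "length vs \<ge> 3"
    "\<forall>i<length vs. cay_adj G S (vs ! i) (vs ! (Suc i mod length vs))"
    and i: "i < length vs" "{vs ! i, vs ! (Suc i mod length vs)} = {t [^] (3::nat), t [^] (3::nat) \<otimes> s}"
    unfolding induced_ham_cycle_with_edge_def by blast
  define m where "m = length vs"
  define r where "r = rotate (Suc i) vs"
  have rl: "length r = m" by (simp add: r_def m_def)
  have rn: "\<And>j. j < m \<Longrightarrow> r ! j = vs ! ((Suc i + j) mod m)"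
    by (metis r_def m_def nth_rotate)
  have vsc: "set vs \<subseteq> carrier G" using vs by auto
  have rc: "set r \<subseteq> carrier G" using vsc by (simp add: r_def)
  have rch: "chain G S r" unfolding chain_def
  proof (intro allI impI)
    fix j assume j: "Suc j < length r"
    have "(Suc i + j) mod m < m" using vs(3) unfolding m_def by (intro mod_less_divisor) linarith
    then have "cay_adj G S (vs ! ((Suc i + j) mod m)) (vs ! (Suc ((Suc i + j) mod m) mod m))"
      using vs(4) m_def by simp
    moreover have "Suc ((Suc i + j) mod m) mod m = (Suc i + Suc j) mod m"
      by (simp add: mod_Suc_eq)
    ultimately show "cay_adj G S (r ! j) (r ! Suc j)" using rn j rl by simp
  qed
  have m3: "m \<ge> 3" using vs m_def by simp
  have hdr: "hd r = vs ! (Suc i mod m)"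
  proof -
    have "r \<noteq> []" using rl m3 by auto
    then have "hd r = r ! 0" by (rule hd_conv_nth)
    then show ?thesis using rn[of 0] m3 by simp
  qed
  have lastr: "last r = vs ! i"
  proof -
    have "r \<noteq> []" using rl m3 by auto
    then have "last r = r ! (m - 1)" using rl by (simp add: last_conv_nth)
    also have "\<dots> = vs ! ((Suc i + (m - 1)) mod m)" using rn m3 by simp
    also have "Suc i + (m - 1) = i + m" using m3 by simp
    also have "(i + m) mod m = i" using i(1) m_def by simp
    finally show ?thesis .
  qed
  have t3ne: "t [^] (3::nat) \<noteq> t [^] (3::nat) \<otimes> s" using s_ne s t by simp
  obtain ws where ws: "distinct ws" "set ws = carrier G - Y" "length ws \<ge> 3" "chain G S ws"
    "hd ws = t [^] (3::nat) \<otimes> s" "last ws = t [^] (3::nat)"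
  proof (cases "vs ! i = t [^] (3::nat)")
    case True
    then have "vs ! (Suc i mod m) = t [^] (3::nat) \<otimes> s" using i(2) t3ne m_def
      by (auto simp: doubleton_eq_iff)
    then show ?thesis using that[of r] vs rch hdr lastr True rl m_def by (simp add: r_def)
  next
    case False
    then have a: "vs ! i = t [^] (3::nat) \<otimes> s" "vs ! (Suc i mod m) = t [^] (3::nat)"
      using i(2) m_def by (auto simp: doubleton_eq_iff)
    have "chain G S (rev r)" unfolding chain_def
    proof (intro allI impI)
      fix j assume j: "Suc j < length (rev r)"
      define k where "k = m - Suc (Suc j)"
      have k: "Suc k < length r" "Suc k = m - Suc j" using j rl by (auto simp: k_def)
      have "cay_adj G S (r ! k) (r ! Suc k)" using rch k unfolding chain_def by blast
      then have "cay_adj G S (r ! Suc k) (r ! k)"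
        using cay_adj_sym[OF S_sub S_inv] rc k(1) by (meson nth_mem subsetD)
      moreover have "rev r ! j = r ! Suc k" "rev r ! Suc j = r ! k"
        using j rl k by (auto simp: rev_nth k_def)
      ultimately show "cay_adj G S (rev r ! j) (rev r ! Suc j)" by simp
    qed
    moreover have "r \<noteq> []" using rl m3 by auto
    ultimately show ?thesis using that[of "rev r"] vs a hdr lastr rl m_def
      by (simp add: r_def hd_rev last_rev)
  qed
  have wsne: "ws \<noteq> []" using ws by auto
  have sp: "set (steps_of G ws) \<subseteq> S" "vl G (hd ws) (steps_of G ws) = butlast ws"
    "foldl (\<lambda>x a. x \<otimes> a) (hd ws) (steps_of G ws) = last ws"
    using steps_of_props[OF S_sub wsne ws(4)] by auto
  have e1: "pt \<one> 1 2 0 \<otimes> t = t [^] (3::nat) \<otimes> s"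
    using pt_t[of \<one> 1 2 0] s t u by (simp add: pt_def m_comm)
  have e1': "pt \<one> (Suc 0) 2 0 \<otimes> t = t [^] (3::nat) \<otimes> s" using e1 by simp
  have e2: "t [^] (3::nat) \<otimes> inv t = pt \<one> 0 2 0"
    using pt_it[of \<one> 0 2 0] s t u by (simp add: pt_def)
  show ?thesis
  proof (intro exI allI impI)
    fix P assume "good P"
    then have g: "set P \<subseteq> S" "foldl (\<lambda>x a. x \<otimes> a) (pt \<one> 0 2 0) P = pt \<one> 1 2 0"
     "distinct (vl G (pt \<one> 0 2 0) P @ [pt \<one> 1 2 0])" "set (vl G (pt \<one> 0 2 0) P @ [pt \<one> 1 2 0]) = Y"
      unfolding good_def by auto
    show "ham_cycle G S (pt \<one> 0 2 0) (P @ (t # steps_of G ws @ [inv t]))"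
    proof (rule ham_cycleI[where L="(vl G (pt \<one> 0 2 0) P @ [pt \<one> 1 2 0]) @ ws"])
      have "vl G (hd ws) (steps_of G ws @ [inv t]) = ws"
        using sp wsne by (simp add: vl_append)
      then show "vl G (pt \<one> 0 2 0) (P @ t # steps_of G ws @ [inv t]) = (vl G (pt \<one> 0 2 0) P @ [pt \<one> 1 2 0]) @ ws"
        by (simp add: vl_append g(2) e1 e1' ws(5))
      show "distinct ((vl G (pt \<one> 0 2 0) P @ [pt \<one> 1 2 0]) @ ws)"
        using g(3,4) ws(1,2) by (simp only: distinct_append) auto
      show "set ((vl G (pt \<one> 0 2 0) P @ [pt \<one> 1 2 0]) @ ws) = carrier G"
        using g(4) ws(2) Y_sub by auto
      have "length (steps_of G ws) = length ws - 1"
        using sp(2) length_vl[of G "hd ws" "steps_of G ws"] by simp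
      then show "3 \<le> length (P @ t # steps_of G ws @ [inv t])" using ws(3) by simp
      show "foldl (\<lambda>x a. x \<otimes> a) (pt \<one> 0 2 0) (P @ t # steps_of G ws @ [inv t]) = pt \<one> 0 2 0"
        using g(2) e1 e1' ws(5) sp(3) ws(6) e2 by simp
    qed (use g S_def t sp(1) in auto)
  qed
qed

lemma Sq_from_paths:
  assumes x: "x \<in> carrier G"
    and fl: "\<And>g R. g \<in> carrier G \<Longrightarrow> walk_flow G (pt g 0 2 0) (P1 @ R) - walk_flow G (pt g 0 2 0) (P2 @ R)
       + walk_flow G (pt g 0 2 0) (P3 @ R) - walk_flow G (pt g 0 2 0) (P4 @ R) = Sq G (pt g i j k) a b"
    and gd: "good P1" "good P2" "good P3" "good P4"
  shows "Sq G x a b \<in> ham_span G S"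
proof -
  obtain R where R: "\<And>P. good P \<Longrightarrow> ham_cycle G S (pt \<one> 0 2 0) (P @ R)" using LemB by blast
  define g where "g = x \<otimes> inv (pt \<one> i j k)"
  have gc: "g \<in> carrier G" using x by (simp add: g_def)
  have H: "walk_flow G (pt g 0 2 0) (P @ R) \<in> ham_span G S" if "good P" for P
  proof -
    have "ham_cycle G S (g \<otimes> pt \<one> 0 2 0) (P @ R)"
      using ham_cycle_translate[OF R[OF that] gc S_sub] .
    then show ?thesis using pt_g[OF gc] ham_span.ham by metis
  qed
  have "pt g i j k = x" using pt_g[OF gc] x by (simp add: g_def m_assoc)
  then have "Sq G x a b = walk_flow G (pt g 0 2 0) (P1 @ R) - walk_flow G (pt g 0 2 0) (P2 @ R)
       + walk_flow G (pt g 0 2 0) (P3 @ R) - walk_flow G (pt g 0 2 0) (P4 @ R)"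
    using fl[OF gc, of R] by simp
  then show ?thesis using H gd ham_span_minus ham_span_plus by metis
qed

lemma good0: "good [inv t, s, u, inv s, t, s, s, inv t, inv t, inv s, inv s, inv u, s, s, t, t, inv s]"
  by (rule goodI[where L="[(0,2,0), (0,1,0), (1,1,0), (1,1,1), (0,1,1), (0,2,1), (1,2,1), (2,2,1), (2,1,1), (2,0,1), (1,0,1), (0,0,1), (0,0,0), (1,0,0), (2,0,0), (2,1,0), (2,2,0), (1,2,0)]"]) (simp_all add: S_def steps numeral_2_eq_2)

lemma good1: "good [inv t, inv t, u, t, t, s, s, inv t, inv t, inv s, t, inv u, inv t, s, t, t, inv s]"
  by (rule goodI[where L="[(0,2,0), (0,1,0), (0,0,0), (0,0,1), (0,1,1), (0,2,1), (1,2,1), (2,2,1), (2,1,1), (2,0,1), (1,0,1), (1,1,1), (1,1,0), (1,0,0), (2,0,0), (2,1,0), (2,2,0), (1,2,0)]"]) (simp_all add: S_def steps numeral_2_eq_2)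

lemma good2: "good [u, inv t, s, inv u, inv s, inv t, u, s, inv u, s, u, t, inv u, t, u, inv s, inv u]"
  by (rule goodI[where L="[(0,2,0), (0,2,1), (0,1,1), (1,1,1), (1,1,0), (0,1,0), (0,0,0), (0,0,1), (1,0,1), (1,0,0), (2,0,0), (2,0,1), (2,1,1), (2,1,0), (2,2,0), (2,2,1), (1,2,1), (1,2,0)]"]) (simp_all add: S_def steps numeral_2_eq_2)

lemma good3: "good [u, inv t, inv t, inv u, t, s, u, inv t, inv u, s, u, t, inv u, t, u, inv s, inv u]"
  by (rule goodI[where L="[(0,2,0), (0,2,1), (0,1,1), (0,0,1), (0,0,0), (0,1,0), (1,1,0), (1,1,1), (1,0,1), (1,0,0), (2,0,0), (2,0,1), (2,1,1), (2,1,0), (2,2,0), (2,2,1), (1,2,1), (1,2,0)]"]) (simp_all add: S_def steps numeral_2_eq_2)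

lemma good4: "good [inv t, inv t, s, u, inv s, t, t, s, inv t, inv u, s, inv t, u, t, t, inv u, inv s]"
  by (rule goodI[where L="[(0,2,0), (0,1,0), (0,0,0), (1,0,0), (1,0,1), (0,0,1), (0,1,1), (0,2,1), (1,2,1), (1,1,1), (1,1,0), (2,1,0), (2,0,0), (2,0,1), (2,1,1), (2,2,1), (2,2,0), (1,2,0)]"]) (simp_all add: S_def steps numeral_2_eq_2)

lemma good5: "good [inv t, s, s, u, inv s, inv t, s, inv u, inv s, inv s, u, t, t, s, s, inv u, inv s]"
  by (rule goodI[where L="[(0,2,0), (0,1,0), (1,1,0), (2,1,0), (2,1,1), (1,1,1), (1,0,1), (2,0,1), (2,0,0), (1,0,0), (0,0,0), (0,0,1), (0,1,1), (0,2,1), (1,2,1), (2,2,1), (2,2,0), (1,2,0)]"]) (simp_all add: S_def steps numeral_2_eq_2)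

lemma good6: "good [u, inv t, inv u, s, inv t, inv s, u, s, s, inv u, t, t, u, inv t, inv s, t, inv u]"
  by (rule goodI[where L="[(0,2,0), (0,2,1), (0,1,1), (0,1,0), (1,1,0), (1,0,0), (0,0,0), (0,0,1), (1,0,1), (2,0,1), (2,0,0), (2,1,0), (2,2,0), (2,2,1), (2,1,1), (1,1,1), (1,2,1), (1,2,0)]"]) (simp_all add: S_def steps numeral_2_eq_2)

lemma good7: "good [u, inv t, inv u, inv t, u, s, t, inv u, inv t, s, u, t, inv u, t, u, inv s, inv u]"
  by (rule goodI[where L="[(0,2,0), (0,2,1), (0,1,1), (0,1,0), (0,0,0), (0,0,1), (1,0,1), (1,1,1), (1,1,0), (1,0,0), (2,0,0), (2,0,1), (2,1,1), (2,1,0), (2,2,0), (2,2,1), (1,2,1), (1,2,0)]"]) (simp_all add: S_def steps numeral_2_eq_2)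

lemma good8: "good [inv t, inv t, u, s, inv u, s, u, t, inv s, inv s, t, s, s, inv u, inv t, inv s, t]"
  by (rule goodI[where L="[(0,2,0), (0,1,0), (0,0,0), (0,0,1), (1,0,1), (1,0,0), (2,0,0), (2,0,1), (2,1,1), (1,1,1), (0,1,1), (0,2,1), (1,2,1), (2,2,1), (2,2,0), (2,1,0), (1,1,0), (1,2,0)]"]) (simp_all add: S_def steps numeral_2_eq_2)

lemma good9: "good [inv t, inv t, u, s, t, inv s, t, s, s, inv u, inv t, u, inv t, inv u, inv s, t, t]"
  by (rule goodI[where L="[(0,2,0), (0,1,0), (0,0,0), (0,0,1), (1,0,1), (1,1,1), (0,1,1), (0,2,1), (1,2,1), (2,2,1), (2,2,0), (2,1,0), (2,1,1), (2,0,1), (2,0,0), (1,0,0), (1,1,0), (1,2,0)]"]) (simp_all add: S_def steps numeral_2_eq_2)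

lemma good10: "good [u, inv t, inv u, inv t, u, s, t, s, inv t, inv u, inv s, t, s, t, u, inv s, inv u]"
  by (rule goodI[where L="[(0,2,0), (0,2,1), (0,1,1), (0,1,0), (0,0,0), (0,0,1), (1,0,1), (1,1,1), (2,1,1), (2,0,1), (2,0,0), (1,0,0), (1,1,0), (2,1,0), (2,2,0), (2,2,1), (1,2,1), (1,2,0)]"]) (simp_all add: S_def steps numeral_2_eq_2)

lemma flow_st:
  assumes g: "g \<in> carrier G"
  shows "walk_flow G (pt g 0 2 0) ([inv t, s, u, inv s, t, s, s, inv t, inv t, inv s, inv s, inv u, s, s, t, t, inv s] @ R)
    - walk_flow G (pt g 0 2 0) ([inv t, inv t, u, t, t, s, s, inv t, inv t, inv s, t, inv u, inv t, s, t, t, inv s] @ R)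
    + walk_flow G (pt g 0 2 0) ([u, inv t, s, inv u, inv s, inv t, u, s, inv u, s, u, t, inv u, t, u, inv s, inv u] @ R)
    - walk_flow G (pt g 0 2 0) ([u, inv t, inv t, inv u, t, s, u, inv t, inv u, s, u, t, inv u, t, u, inv s, inv u] @ R)
    = Sq G (pt g 0 0 0) s t"
  using g by (simp add: walk_flow_Cons steps Sq_def numeral_2_eq_2)

lemma Sq_st: assumes x: "x \<in> carrier G" shows "Sq G x s t \<in> ham_span G S"
  using Sq_from_paths[OF x flow_st good0 good1 good2 good3] .

lemma flow_su:
  assumes g: "g \<in> carrier G"
  shows "walk_flow G (pt g 0 2 0) ([inv t, inv t, s, u, inv s, t, t, s, inv t, inv u, s, inv t, u, t, t, inv u, inv s] @ R)
    - walk_flow G (pt g 0 2 0) ([inv t, s, s, u, inv s, inv t, s, inv u, inv s, inv s, u, t, t, s, s, inv u, inv s] @ R)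
    + walk_flow G (pt g 0 2 0) ([u, inv t, inv u, s, inv t, inv s, u, s, s, inv u, t, t, u, inv t, inv s, t, inv u] @ R)
    - walk_flow G (pt g 0 2 0) ([u, inv t, inv u, inv t, u, s, t, inv u, inv t, s, u, t, inv u, t, u, inv s, inv u] @ R)
    = Sq G (pt g 0 0 0) s u"
  using g by (simp add: walk_flow_Cons steps Sq_def numeral_2_eq_2)

lemma Sq_su: assumes x: "x \<in> carrier G" shows "Sq G x s u \<in> ham_span G S"
  using Sq_from_paths[OF x flow_su good4 good5 good6 good7] .

lemma flow_tu:
  assumes g: "g \<in> carrier G"
  shows "walk_flow G (pt g 0 2 0) ([inv t, inv t, u, s, inv u, s, u, t, inv s, inv s, t, s, s, inv u, inv t, inv s, t] @ R)
    - walk_flow G (pt g 0 2 0) ([inv t, inv t, u, s, t, inv s, t, s, s, inv u, inv t, u, inv t, inv u, inv s, t, t] @ R)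
    + walk_flow G (pt g 0 2 0) ([u, inv t, inv u, inv t, u, s, t, s, inv t, inv u, inv s, t, s, t, u, inv s, inv u] @ R)
    - walk_flow G (pt g 0 2 0) ([u, inv t, inv u, inv t, u, s, t, inv u, inv t, s, u, t, inv u, t, u, inv s, inv u] @ R)
    = Sq G (pt g 1 0 0) t u"
  using g by (simp add: walk_flow_Cons steps Sq_def numeral_2_eq_2)

lemma Sq_tu: assumes x: "x \<in> carrier G" shows "Sq G x t u \<in> ham_span G S"
  using Sq_from_paths[OF x flow_tu good8 good9 good10 good7] .

lemma Sq_base:
  assumes "p \<in> {s, t, u}" "q \<in> {s, t, u}" "x \<in> carrier G"
  shows "Sq G x p q \<in> ham_span G S"
proof -
  have sw: "Sq G x q p \<in> ham_span G S \<Longrightarrow> Sq G x p q \<in> ham_span G S"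
    using ham_span_uminus Sq_swap by metis
  have z: "Sq G x p p \<in> ham_span G S" for p using Sq_same ham_span_0 by metis
  have st: "Sq G x s t \<in> ham_span G S" "Sq G x s u \<in> ham_span G S" "Sq G x t u \<in> ham_span G S"
    using Sq_st Sq_su Sq_tu assms(3) by auto
  have ts: "Sq G x t s \<in> ham_span G S" "Sq G x u s \<in> ham_span G S" "Sq G x u t \<in> ham_span G S"
    using st ham_span_uminus Sq_swap by metis+
  from assms(1,2) show ?thesis
    apply (elim insertE emptyE)
    using z st ts by simp_all
qed

lemma Sq_S1:
  assumes "a \<in> S" "q \<in> {s, t, u}" "x \<in> carrier G"
  shows "Sq G x a q \<in> ham_span G S"
proof -
  obtain p where p: "p \<in> {s, t, u}" "a = p \<or> a = inv p" using assms(1) S_def by auto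
  have pc: "p \<in> carrier G" "q \<in> carrier G" using p(1) assms(2) s t u by auto
  show ?thesis
  proof (cases "a = p")
    case True then show ?thesis using Sq_base p assms by simp
  next
    case False
    then have a: "a = inv p" using p by auto
    have "Sq G x a q = - Sq G (x \<otimes> inv p) p q" using Sq_inv1[OF assms(3) pc] a by simp
    moreover have "Sq G (x \<otimes> inv p) p q \<in> ham_span G S"
      using Sq_base p(1) assms(2,3) pc by simp
    ultimately show ?thesis using ham_span_uminus by simp
  qed
qed

lemma Sq_S:
  assumes "a \<in> S" "b \<in> S" "x \<in> carrier G"
  shows "Sq G x a b \<in> ham_span G S"
proof -
  obtain q where q: "q \<in> {s, t, u}" "b = q \<or> b = inv q" using assms(2) S_def by auto
  have qc: "q \<in> carrier G" "a \<in> carrier G" using q(1) assms(1) S_sub s t u by auto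
  show ?thesis
  proof (cases "b = q")
    case True then show ?thesis using Sq_S1 q assms by simp
  next
    case False
    then have b: "b = inv q" using q by auto
    have "Sq G x a b = - Sq G x (inv q) a" using b Sq_swap by metis
    also have "\<dots> = Sq G (x \<otimes> inv q) q a" using Sq_inv1[OF assms(3) qc] by simp
    also have "\<dots> = - Sq G (x \<otimes> inv q) a q" using Sq_swap by metis
    finally have e: "Sq G x a b = - Sq G (x \<otimes> inv q) a q" .
    have "Sq G (x \<otimes> inv q) a q \<in> ham_span G S"
      using Sq_S1 assms(1,3) q(1) qc by simp
    then show ?thesis using e ham_span_uminus by simp
  qed
qed

end

theorem proposition10p1:
  fixes G (structure) and s t u :: 'a and S :: "'a set"
  assumes "comm_group G" and "finite (carrier G)" and "even (order G)"
    and "s \<in> carrier G" and "t \<in> carrier G" and "u \<in> carrier G"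
    and "S = {s, inv s, t, inv t, u, inv u}"
    and "generate G S = carrier G"
    and "inj_on (\<lambda>(i, j, k). s [^] (i::nat) \<otimes> t [^] (j::nat) \<otimes> u [^] (k::nat))
                ({0..2} \<times> {0..2} \<times> {0..1})"
    and "Y = (\<lambda>(i, j, k). s [^] (i::nat) \<otimes> t [^] (j::nat) \<otimes> u [^] (k::nat))
                ` ({0..2} \<times> {0..2} \<times> {0..1})"
    and "carrier G = Y \<or>
         induced_ham_cycle_with_edge G S (carrier G - Y) (t [^] (3::nat)) (t [^] (3::nat) \<otimes> s)"
  shows "\<forall>v\<in>carrier G. \<forall>a\<in>S. \<forall>b\<in>S. walk_flow G v [a, b, inv a, inv b] \<in> ham_span G S"
proof -
  interpret P10b G s t u S Y
    using assms by (simp add: P10b_def P10_def P10b_axioms_def P10_axioms_def)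
  show ?thesis
  proof (intro ballI)
    fix v a b assume v: "v \<in> carrier G" and a: "a \<in> S" and b: "b \<in> S"
    have "walk_flow G v [a, b, inv a, inv b] = Sq G v a b"
      using walk_flow_sq v a b S_sub by auto
    then show "walk_flow G v [a, b, inv a, inv b] \<in> ham_span G S" using Sq_S a b v by simp
  qed
qed

end
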